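(* Let $G$ be a connected simple graph on $n\ge2$ vertices, let $\alpha\in\mathbb{R}$, and suppose the vertices are labeled so that $({}^\alpha m)_1+d_1\ge({}^\alpha m)_2+d_2\ge\cdots\ge({}^\alpha m)_n+d_n$. Let $\Delta$ be the maximum degree of $G$ and $N=\max_{i\sim j}d_j^\alpha/d_i^\alpha$. Then for $1\le i\le n$, writing $s_k=({}^\alpha m)_k+d_k$, \[\rho(Q(G))\le \frac{s_i+\Delta-N+\sqrt{(s_i-\Delta+N)^2+4N\sum_{k=1}^{i-1}(s_k-s_i)}}{2}.\] Equality holds if and only if $s_1=s_2=\cdots=s_n$, or there is $t$ with $2\le t\le i$ such that: if $\alpha=0$, $G$ is a bidegreed graph with $d_1=\cdots=d_{t-1}=n-1>d_t=\cdots=d_n$; if $\alpha>0$, $G$ is a bidegreed graph with $s_1>s_2=\cdots=s_n$ and $d_1=n-1>d_2=\cdots=d_n$. (For $\alpha<0$ only the first alternative occurs.)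
   Context: $Q(G)=D(G)+A(G)$ is the signless Laplacian matrix, where $A(G)$ is the adjacency matrix and $D(G)=\mathrm{diag}(d_1,\dots,d_n)$ is the diagonal matrix of vertex degrees. $i\sim j$ means $v_i,v_j$ adjacent. The generalized average degree is $({}^\alpha m)_i=\frac{\sum_{j\sim i}d_j^\alpha}{d_i^\alpha}$. $\rho$ is the spectral radius. A bidegreed graph has exactly two distinct vertex degrees. An empty sum equals $0$. *)

theory Defs
  imports "Jordan_Normal_Form.Spectral_Radius"
begin

text \<open>A simple graph on the vertex set {0..<n} (vertex k here is v_(k+1) of the paper),
given by an adjacency relation E.\<close>

definition simple_graph :: "nat \<Rightarrow> (nat \<Rightarrow> nat \<Rightarrow> bool) \<Rightarrow> bool" where
  "simple_graph n E \<longleftrightarrow> (\<forall>i j. E i j \<longrightarrow> i < n \<and> j < n) \<and>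
     (\<forall>i j. E i j \<longrightarrow> E j i) \<and> (\<forall>i. \<not> E i i)"

definition connected_graph :: "nat \<Rightarrow> (nat \<Rightarrow> nat \<Rightarrow> bool) \<Rightarrow> bool" where
  "connected_graph n E \<longleftrightarrow> (\<forall>u v. u < n \<longrightarrow> v < n \<longrightarrow> E\<^sup>*\<^sup>* u v)"

definition deg :: "nat \<Rightarrow> (nat \<Rightarrow> nat \<Rightarrow> bool) \<Rightarrow> nat \<Rightarrow> nat" where
  "deg n E i = card {j. j < n \<and> E i j}"

definition adj_mat :: "nat \<Rightarrow> (nat \<Rightarrow> nat \<Rightarrow> bool) \<Rightarrow> real mat" where
  "adj_mat n E = mat n n (\<lambda>(i, j). if E i j then 1 else 0)"

definition deg_mat :: "nat \<Rightarrow> (nat \<Rightarrow> nat \<Rightarrow> bool) \<Rightarrow> real mat" where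
  "deg_mat n E = mat n n (\<lambda>(i, j). if i = j then real (deg n E i) else 0)"

definition signless_laplacian :: "nat \<Rightarrow> (nat \<Rightarrow> nat \<Rightarrow> bool) \<Rightarrow> real mat" where
  "signless_laplacian n E = deg_mat n E + adj_mat n E"

definition rho_Q :: "nat \<Rightarrow> (nat \<Rightarrow> nat \<Rightarrow> bool) \<Rightarrow> real" where
  "rho_Q n E = spectral_radius (map_mat complex_of_real (signless_laplacian n E))"

definition gen_avg_deg :: "nat \<Rightarrow> (nat \<Rightarrow> nat \<Rightarrow> bool) \<Rightarrow> real \<Rightarrow> nat \<Rightarrow> real" where
  "gen_avg_deg n E \<alpha> i =
     (\<Sum>j\<in>{j. j < n \<and> E i j}. real (deg n E j) powr \<alpha>) / real (deg n E i) powr \<alpha>"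

definition bidegreed :: "nat \<Rightarrow> (nat \<Rightarrow> nat \<Rightarrow> bool) \<Rightarrow> bool" where
  "bidegreed n E \<longleftrightarrow> card (deg n E ` {..<n}) = 2"

end

theory Submission
  imports Defs
begin


lemma maxprin_aux:
  fixes q :: "nat \<Rightarrow> nat \<Rightarrow> real" and p :: "nat \<Rightarrow> real" and v :: "nat \<Rightarrow> complex"
  assumes q0: "\<And>k j. k < n \<Longrightarrow> j < n \<Longrightarrow> q k j \<ge> 0"
    and p: "\<And>k. k < n \<Longrightarrow> p k > 0"
    and v: "j0 < n" "v j0 \<noteq> 0"
    and ev: "\<And>k. k < n \<Longrightarrow> (\<Sum>j<n. complex_of_real (q k j) * v j) = lam * v k"
    and m_def: "m = Max ((\<lambda>j. cmod (v j) / p j) ` {..<n})"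
    and k: "k < n" "cmod (v k) / p k = m"
  shows "m > 0" "\<And>j. j < n \<Longrightarrow> cmod (v j) \<le> m * p j" "cmod (v k) = m * p k"
    "cmod lam * (m * p k) \<le> (\<Sum>j<n. q k j * cmod (v j))"
    "(\<Sum>j<n. q k j * cmod (v j)) \<le> m * (\<Sum>j<n. q k j * p j)"
proof -
  have le: "cmod (v j) / p j \<le> m" if "j < n" for j
    unfolding m_def using that by (intro Max_ge) auto
  show "0 < m" using le[OF v(1)] p[OF v(1)] v by (smt (verit) divide_pos_pos zero_less_norm_iff)
  show le2: "cmod (v j) \<le> m * p j" if "j < n" for j
    using le[OF that] p[OF that] by (simp add: divide_le_eq mult.commute)
  show vk: "cmod (v k) = m * p k" using k p[OF k(1)] by (simp add: divide_eq_eq)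
  have "cmod lam * (m * p k) = cmod (lam * v k)" using vk by (simp add: norm_mult)
  also have "\<dots> = cmod (\<Sum>j<n. complex_of_real (q k j) * v j)" using ev[OF k(1)] by simp
  also have "\<dots> \<le> (\<Sum>j<n. cmod (complex_of_real (q k j) * v j))" by (rule norm_sum)
  also have "\<dots> = (\<Sum>j<n. q k j * cmod (v j))"
    using q0[OF k(1)] by (intro sum.cong) (auto simp: norm_mult)
  finally show "cmod lam * (m * p k) \<le> (\<Sum>j<n. q k j * cmod (v j))" .
  have "(\<Sum>j<n. q k j * cmod (v j)) \<le> (\<Sum>j<n. q k j * (m * p j))"
    using q0[OF k(1)] le2 by (intro sum_mono mult_left_mono) auto
  also have "\<dots> = m * (\<Sum>j<n. q k j * p j)" by (simp add: sum_distrib_left algebra_simps)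
  finally show "(\<Sum>j<n. q k j * cmod (v j)) \<le> m * (\<Sum>j<n. q k j * p j)" .
qed

lemma maxprin:
  fixes q :: "nat \<Rightarrow> nat \<Rightarrow> real" and p :: "nat \<Rightarrow> real" and v :: "nat \<Rightarrow> complex"
  assumes q0: "\<And>k j. k < n \<Longrightarrow> j < n \<Longrightarrow> q k j \<ge> 0"
    and p: "\<And>k. k < n \<Longrightarrow> p k > 0"
    and v: "j0 < n" "v j0 \<noteq> 0"
    and ev: "\<And>k. k < n \<Longrightarrow> (\<Sum>j<n. complex_of_real (q k j) * v j) = lam * v k"
    and row: "\<And>k. k < n \<Longrightarrow> (\<Sum>j<n. q k j * p j) \<le> phi * p k"
  shows "cmod lam \<le> phi"
proof -
  define m where "m = Max ((\<lambda>j. cmod (v j) / p j) ` {..<n})"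
  have "m \<in> (\<lambda>j. cmod (v j) / p j) ` {..<n}" unfolding m_def using v(1) by (intro Max_in) auto
  then obtain k where k: "k < n" "cmod (v k) / p k = m" by auto
  note A = maxprin_aux[OF q0 p v ev m_def k]
  have "cmod lam * (m * p k) \<le> m * (phi * p k)"
    using A(4,5) row[OF k(1)] A(1) by (smt (verit) mult_left_mono)
  hence "cmod lam * (m * p k) \<le> phi * (m * p k)" by (simp add: algebra_simps)
  thus ?thesis using A(1) p[OF k(1)] by simp
qed

lemma maxprin_eq:
  fixes q :: "nat \<Rightarrow> nat \<Rightarrow> real" and p :: "nat \<Rightarrow> real" and v :: "nat \<Rightarrow> complex"
  assumes q0: "\<And>k j. k < n \<Longrightarrow> j < n \<Longrightarrow> q k j \<ge> 0"
    and p: "\<And>k. k < n \<Longrightarrow> p k > 0"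
    and v: "j0 < n" "v j0 \<noteq> 0"
    and ev: "\<And>k. k < n \<Longrightarrow> (\<Sum>j<n. complex_of_real (q k j) * v j) = lam * v k"
    and row: "\<And>k. k < n \<Longrightarrow> (\<Sum>j<n. q k j * p j) \<le> phi * p k"
    and adj: "\<And>k j. E k j \<Longrightarrow> k < n \<and> j < n \<and> q k j > 0"
    and conn: "\<And>u w. u < n \<Longrightarrow> w < n \<Longrightarrow> E\<^sup>*\<^sup>* u w"
    and lam: "cmod lam \<ge> phi"
  shows "\<And>k. k < n \<Longrightarrow> (\<Sum>j<n. q k j * p j) = phi * p k"
proof -
  define m where "m = Max ((\<lambda>j. cmod (v j) / p j) ` {..<n})"
  define S where "S = {k. k < n \<and> cmod (v k) / p k = m}"
  have key: "(\<Sum>j<n. q k j * p j) = phi * p k \<and> (\<forall>j. E k j \<longrightarrow> j \<in> S)" if kS: "k \<in> S" for k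
  proof -
    have k: "k < n" "cmod (v k) / p k = m" using kS S_def by auto
    note A = maxprin_aux[OF q0 p v ev m_def k]
    have pk: "p k > 0" using p k by auto
    have "phi * (m * p k) \<le> cmod lam * (m * p k)"
      using lam A(1) pk by (intro mult_right_mono) auto
    also have "\<dots> \<le> (\<Sum>j<n. q k j * cmod (v j))" by (rule A(4))
    also have "\<dots> \<le> m * (\<Sum>j<n. q k j * p j)" by (rule A(5))
    also have "\<dots> \<le> m * (phi * p k)" using row[OF k(1)] A(1) by simp
    finally have "phi * (m * p k) \<le> m * (phi * p k)" .
    have eq1: "(\<Sum>j<n. q k j * p j) = phi * p k"
    proof -
      have "m * (\<Sum>j<n. q k j * p j) \<ge> m * (phi * p k)"
        using \<open>phi * (m * p k) \<le> cmod lam * (m * p k)\<close> A(4) A(5) by (simp add: algebra_simps)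
      then show ?thesis using row[OF k(1)] A(1) by (smt (verit) mult_le_cancel_left_pos)
    qed
    have eq2: "(\<Sum>j<n. q k j * (m * p j - cmod (v j))) = 0"
    proof -
      have "(\<Sum>j<n. q k j * (m * p j - cmod (v j))) = m * (\<Sum>j<n. q k j * p j) - (\<Sum>j<n. q k j * cmod (v j))"
        by (simp add: sum_subtractf sum_distrib_left algebra_simps)
      moreover have "(\<Sum>j<n. q k j * cmod (v j)) \<ge> m * (phi * p k)"
        using \<open>phi * (m * p k) \<le> cmod lam * (m * p k)\<close> A(4) by (simp add: algebra_simps)
      ultimately have "(\<Sum>j<n. q k j * (m * p j - cmod (v j))) \<le> 0" using eq1 by simp
      moreover have "(\<Sum>j<n. q k j * (m * p j - cmod (v j))) \<ge> 0"
        using q0[OF k(1)] A(2) by (intro sum_nonneg mult_nonneg_nonneg) auto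
      ultimately show ?thesis by simp
    qed
    have "j \<in> S" if "E k j" for j
    proof -
      have jn: "j < n" and qp: "q k j > 0" using adj[OF that] by auto
      have "\<forall>j\<in>{..<n}. q k j * (m * p j - cmod (v j)) = 0"
        using eq2 q0[OF k(1)] A(2) by (subst sum_nonneg_eq_0_iff[symmetric]) (auto intro!: mult_nonneg_nonneg)
      hence "q k j = 0 \<or> m * p j = cmod (v j)" using jn by auto
      hence "m * p j = cmod (v j)" using qp by auto
      thus ?thesis unfolding S_def using jn p[OF jn] by (simp add: field_simps)
    qed
    thus ?thesis using eq1 by auto
  qed
  have "m \<in> (\<lambda>j. cmod (v j) / p j) ` {..<n}" unfolding m_def using v(1) by (intro Max_in) auto
  then obtain k0 where k0: "k0 \<in> S" unfolding S_def by auto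
  have reach: "E\<^sup>*\<^sup>* a b \<Longrightarrow> a \<in> S \<Longrightarrow> b \<in> S" for a b
    by (induction rule: rtranclp_induct) (use key in auto)
  fix k assume "k < n"
  hence "k \<in> S" using reach[OF conn[of k0 k] k0] k0 unfolding S_def by auto
  thus "(\<Sum>j<n. q k j * p j) = phi * p k" using key by auto
qed



definition qQ :: "nat \<Rightarrow> (nat \<Rightarrow> nat \<Rightarrow> bool) \<Rightarrow> nat \<Rightarrow> nat \<Rightarrow> real" where
  "qQ n E k j = (if k = j then real (deg n E k) else 0) + (if E k j then 1 else 0)"

lemma SL_carrier: "map_mat complex_of_real (signless_laplacian n E) \<in> carrier_mat n n"
  unfolding signless_laplacian_def deg_mat_def adj_mat_def by auto

lemma SL_entry: "k < n \<Longrightarrow> j < n \<Longrightarrow>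
   map_mat complex_of_real (signless_laplacian n E) $$ (k, j) = complex_of_real (qQ n E k j)"
  unfolding signless_laplacian_def deg_mat_def adj_mat_def qQ_def by auto

lemma SL_entry_real: "k < n \<Longrightarrow> j < n \<Longrightarrow>
   signless_laplacian n E $$ (k, j) = qQ n E k j"
  unfolding signless_laplacian_def deg_mat_def adj_mat_def qQ_def by auto

lemma SL_mult: assumes "v \<in> carrier_vec n" "k < n"
  shows "(map_mat complex_of_real (signless_laplacian n E) *\<^sub>v v) $ k
     = (\<Sum>j<n. complex_of_real (qQ n E k j) * v $ j)"
proof -
  have "(map_mat complex_of_real (signless_laplacian n E) *\<^sub>v v) $ k
     = row (map_mat complex_of_real (signless_laplacian n E)) k \<bullet> v"
    using SL_carrier[of n E] assms by auto
  also have "\<dots> = (\<Sum>j<n. complex_of_real (qQ n E k j) * v $ j)"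
    using SL_carrier[of n E] assms unfolding scalar_prod_def
    by (auto simp: SL_entry SL_entry_real lessThan_atLeast0 intro!: sum.cong)
  finally show ?thesis .
qed

lemma eigen_to_fun:
  assumes "lam \<in> spectrum (map_mat complex_of_real (signless_laplacian n E))"
  shows "\<exists>v j0. j0 < n \<and> v j0 \<noteq> 0 \<and> (\<forall>k<n. (\<Sum>j<n. complex_of_real (qQ n E k j) * v j) = lam * v k)"
proof -
  let ?A = "map_mat complex_of_real (signless_laplacian n E)"
  from assms obtain v where ev: "eigenvector ?A v lam" unfolding spectrum_def eigenvalue_def by auto
  have dr: "dim_row ?A = n" using SL_carrier[of n E] by auto
  have vc: "v \<in> carrier_vec n" and vnz: "v \<noteq> 0\<^sub>v n" and eq: "?A *\<^sub>v v = lam \<cdot>\<^sub>v v"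
    using ev unfolding eigenvector_def dr by auto
  obtain j0 where j0: "j0 < n" "v $ j0 \<noteq> 0"
    using vc vnz by (metis carrier_vecD eq_vecI index_zero_vec(1) index_zero_vec(2))
  have "\<forall>k<n. (\<Sum>j<n. complex_of_real (qQ n E k j) * v $ j) = lam * v $ k"
  proof (intro allI impI)
    fix k assume k: "k < n"
    have "(?A *\<^sub>v v) $ k = (lam \<cdot>\<^sub>v v) $ k" using eq by simp
    thus "(\<Sum>j<n. complex_of_real (qQ n E k j) * v $ j) = lam * v $ k"
      using SL_mult[OF vc k] vc k by simp
  qed
  thus ?thesis using j0 by blast
qed

lemma fun_to_eigen:
  assumes j0: "j0 < n" "p j0 \<noteq> 0"
    and eq: "\<And>k. k < n \<Longrightarrow> (\<Sum>j<n. qQ n E k j * p j) = mu * p k"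
  shows "complex_of_real mu \<in> spectrum (map_mat complex_of_real (signless_laplacian n E))"
proof -
  let ?A = "map_mat complex_of_real (signless_laplacian n E)"
  define v where "v = vec n (\<lambda>j. complex_of_real (p j))"
  have vc: "v \<in> carrier_vec n" unfolding v_def by auto
  have vnz: "v \<noteq> 0\<^sub>v n" using j0 unfolding v_def
    by (metis index_vec index_zero_vec(1) of_real_eq_0_iff)
  have "?A *\<^sub>v v = complex_of_real mu \<cdot>\<^sub>v v"
  proof (rule eq_vecI)
    show "dim_vec (?A *\<^sub>v v) = dim_vec (complex_of_real mu \<cdot>\<^sub>v v)"
      using SL_carrier[of n E] vc by auto
    fix k assume "k < dim_vec (complex_of_real mu \<cdot>\<^sub>v v)"
    hence k: "k < n" using vc by auto
    have "(?A *\<^sub>v v) $ k = (\<Sum>j<n. complex_of_real (qQ n E k j) * complex_of_real (p j))"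
      using SL_mult[OF vc k] unfolding v_def by simp
    also have "\<dots> = complex_of_real (\<Sum>j<n. qQ n E k j * p j)" by simp
    also have "\<dots> = complex_of_real (mu * p k)" using eq[OF k] by simp
    finally show "(?A *\<^sub>v v) $ k = (complex_of_real mu \<cdot>\<^sub>v v) $ k"
      using k unfolding v_def by simp
  qed
  hence "eigenvector ?A v (complex_of_real mu)"
    unfolding eigenvector_def using vc vnz SL_carrier[of n E] by auto
  thus ?thesis unfolding spectrum_def eigenvalue_def by auto
qed

lemma rho_Q_mem: "n > 0 \<Longrightarrow> \<exists>lam \<in> spectrum (map_mat complex_of_real (signless_laplacian n E)). rho_Q n E = cmod lam"
  using spectral_radius_mem_max(1)[OF SL_carrier] unfolding rho_Q_def by auto

lemma rho_Q_ge: "n > 0 \<Longrightarrow> lam \<in> spectrum (map_mat complex_of_real (signless_laplacian n E)) \<Longrightarrow> cmod lam \<le> rho_Q n E"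
  using spectral_radius_mem_max(2)[OF SL_carrier] unfolding rho_Q_def by auto



lemma deg_pos:
  assumes g: "simple_graph n E" and c: "connected_graph n E" and n2: "n \<ge> 2" and k: "k < n"
  shows "deg n E k \<ge> 1"
proof -
  define w where "w = (if k = 0 then 1 else (0::nat))"
  have w: "w < n" "w \<noteq> k" using n2 k unfolding w_def by auto
  have "E\<^sup>*\<^sup>* k w" using c k w unfolding connected_graph_def by auto
  then obtain y where "E k y" using w(2) by (metis converse_rtranclpE)
  hence "y \<in> {j. j < n \<and> E k j}" using g unfolding simple_graph_def by auto
  moreover have "finite {j. j < n \<and> E k j}" by auto
  ultimately show ?thesis unfolding deg_def by (metis One_nat_def Suc_leI card_gt_0_iff empty_iff)
qed

lemma deg_le:
  assumes g: "simple_graph n E" and k: "k < n"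
  shows "deg n E k \<le> n - 1"
proof -
  have "{j. j < n \<and> E k j} \<subseteq> {..<n} - {k}" using g unfolding simple_graph_def by auto
  hence "card {j. j < n \<and> E k j} \<le> card ({..<n} - {k})" by (intro card_mono) auto
  thus ?thesis using k unfolding deg_def by simp
qed

lemma deg_full:
  assumes g: "simple_graph n E" and k: "k < n" and dk: "deg n E k = n - 1"
    and j: "j < n" "j \<noteq> k"
  shows "E k j"
proof -
  have sub: "{j. j < n \<and> E k j} \<subseteq> {..<n} - {k}" using g unfolding simple_graph_def by auto
  have "card {j. j < n \<and> E k j} = card ({..<n} - {k})" using k dk unfolding deg_def by simp
  hence "{j. j < n \<and> E k j} = {..<n} - {k}" using sub by (intro card_subset_eq) auto
  thus ?thesis using j by blast
qed

lemma sum_qQ: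
  assumes k: "k < n"
  shows "(\<Sum>j<n. qQ n E k j * f j) = real (deg n E k) * f k + (\<Sum>j\<in>{j. j < n \<and> E k j}. f j)"
proof -
  have "(\<Sum>j<n. qQ n E k j * f j) = (\<Sum>j<n. (if k = j then real (deg n E k) * f j else 0))
       + (\<Sum>j<n. (if E k j then f j else 0))"
    unfolding sum.distrib[symmetric] by (intro sum.cong) (auto simp: qQ_def algebra_simps)
  also have "(\<Sum>j<n. (if k = j then real (deg n E k) * f j else 0)) = real (deg n E k) * f k"
    using k by (simp add: sum.delta)
  also have "(\<Sum>j<n. (if E k j then f j else 0)) = (\<Sum>j\<in>{j. j < n \<and> E k j}. f j)"
    by (simp add: sum.If_cases Collect_conj_eq lessThan_def Int_commute)
  finally show ?thesis .
qed



locale T4 =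
  fixes n :: nat and E :: "nat \<Rightarrow> nat \<Rightarrow> bool" and \<alpha> :: real and i :: nat
  assumes graph: "simple_graph n E" and conn: "connected_graph n E" and n2: "n \<ge> 2"
    and order: "\<And>k l. k \<le> l \<Longrightarrow> l < n \<Longrightarrow>
       gen_avg_deg n E \<alpha> l + real (deg n E l) \<le> gen_avg_deg n E \<alpha> k + real (deg n E k)"
    and i: "i < n"
begin

definition "sv k = gen_avg_deg n E \<alpha> k + real (deg n E k)"
definition "Dl = real (Max (deg n E ` {..<n}))"
definition "NN = Max {real (deg n E b) powr \<alpha> / real (deg n E a) powr \<alpha> | a b. a < n \<and> b < n \<and> E a b}"
definition "dd k = real (deg n E k) powr \<alpha>"
definition "nb k = {j. j < n \<and> E k j}"
definition "Sg = (\<Sum>k<i. sv k - sv i)"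
definition "phi = (sv i + Dl - NN + sqrt ((sv i - Dl + NN)\<^sup>2 + 4 * NN * Sg)) / 2"
definition "c0 = phi - Dl + NN"
definition "xx k = (if k < i then 1 + (sv k - sv i) / c0 else 1)"
definition "pp k = dd k * xx k"

lemma E_bound: "E a b \<Longrightarrow> a < n \<and> b < n" using graph unfolding simple_graph_def by auto
lemma E_sym: "E a b \<Longrightarrow> E b a" using graph unfolding simple_graph_def by auto
lemma E_irr: "\<not> E a a" using graph unfolding simple_graph_def by auto

lemma dpos: "k < n \<Longrightarrow> deg n E k \<ge> 1" using deg_pos[OF graph conn n2] .
lemma dle: "k < n \<Longrightarrow> deg n E k \<le> n - 1" using deg_le[OF graph] .

lemma dd_pos: "k < n \<Longrightarrow> dd k > 0"
  unfolding dd_def using dpos[of k] by auto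

lemma nb_fin: "finite (nb k)" unfolding nb_def by auto
lemma nb_card: "card (nb k) = deg n E k" unfolding nb_def deg_def by simp
lemma nb_ne: "k < n \<Longrightarrow> nb k \<noteq> {}" using dpos[of k] nb_card[of k] by auto
lemma nb_sub: "j \<in> nb k \<Longrightarrow> j < n \<and> E k j" unfolding nb_def by auto

lemma sv_eq: "sv k = real (deg n E k) + (\<Sum>j\<in>nb k. dd j) / dd k"
  unfolding sv_def gen_avg_deg_def nb_def dd_def by simp

lemma sum_dd: "k < n \<Longrightarrow> (\<Sum>j<n. qQ n E k j * dd j) = sv k * dd k"
  using sum_qQ[of k n E dd] dd_pos[of k] unfolding sv_eq nb_def by (simp add: field_simps)

lemma nbsum_pos: "k < n \<Longrightarrow> (\<Sum>j\<in>nb k. dd j) > 0"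
  using nb_ne nb_fin by (intro sum_pos) (auto dest: nb_sub intro: dd_pos)

lemma sv_gt: "k < n \<Longrightarrow> sv k > real (deg n E k)"
  using nbsum_pos[of k] dd_pos[of k] unfolding sv_eq by simp

lemma sv_mono: "k \<le> l \<Longrightarrow> l < n \<Longrightarrow> sv l \<le> sv k"
  using order unfolding sv_def by auto

lemma Dl_ge: "k < n \<Longrightarrow> real (deg n E k) \<le> Dl"
  unfolding Dl_def by auto

lemma Dl_ex: "\<exists>k<n. real (deg n E k) = Dl"
proof -
  have "0 \<in> {..<n}" using n2 by simp
  hence "{..<n} \<noteq> {}" by blast
  hence "Max (deg n E ` {..<n}) \<in> deg n E ` {..<n}" by (intro Max_in) auto
  thus ?thesis unfolding Dl_def by auto
qed

lemma Dl_le: "Dl \<le> real n - 1"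
proof -
  obtain k where k: "k < n" "real (deg n E k) = Dl" using Dl_ex by auto
  have "deg n E k \<le> n - 1" using dle k(1) .
  hence "real (deg n E k) \<le> real (n - 1)" by linarith
  also have "\<dots> = real n - 1" using n2 by (simp add: of_nat_diff)
  finally show ?thesis using k by simp
qed

definition "NS = {real (deg n E b) powr \<alpha> / real (deg n E a) powr \<alpha> | a b. a < n \<and> b < n \<and> E a b}"

lemma NS_fin: "finite NS"
proof -
  have "NS \<subseteq> (\<lambda>(a, b). real (deg n E b) powr \<alpha> / real (deg n E a) powr \<alpha>) ` ({..<n} \<times> {..<n})"
    unfolding NS_def by auto
  thus ?thesis by (rule finite_subset) auto
qed

lemma NS_ne: "NS \<noteq> {}"
proof -
  obtain y where "y \<in> nb 0" using nb_ne[of 0] n2 by auto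
  hence "E 0 y" "y < n" using nb_sub by auto
  moreover have "0 < n" using n2 by auto
  ultimately show ?thesis unfolding NS_def by blast
qed

lemma NN_ge: "E a b \<Longrightarrow> dd b / dd a \<le> NN"
  unfolding NN_def dd_def using NS_fin unfolding NS_def by (intro Max_ge) (auto dest: E_bound)

lemma NN_mem: "\<exists>a b. E a b \<and> NN = dd b / dd a"
proof -
  have "NN \<in> NS" unfolding NN_def NS_def[symmetric] using NS_fin NS_ne by (intro Max_in)
  thus ?thesis unfolding NS_def dd_def by auto
qed

lemma NN_pos: "NN > 0"
  using NN_mem E_bound dd_pos by (metis divide_pos_pos)

lemma Sg_nonneg: "Sg \<ge> 0"
  unfolding Sg_def using i by (intro sum_nonneg) (auto intro: sv_mono)

lemma sv0_gt: "sv 0 > Dl"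
proof -
  obtain k where k: "k < n" "real (deg n E k) = Dl" using Dl_ex by auto
  thus ?thesis using sv_mono[of 0 k] sv_gt[of k] by auto
qed

lemma c0_pos: "c0 > 0"
proof -
  define a where "a = sv i - Dl + NN"
  define R where "R = sqrt (a\<^sup>2 + 4 * NN * Sg)"
  have c0e: "c0 = (a + R) / 2" unfolding c0_def phi_def a_def R_def by (simp add: field_simps)
  have Ra: "R \<ge> \<bar>a\<bar>"
    unfolding R_def using NN_pos Sg_nonneg by (intro real_le_rsqrt) auto
  have R1: "R \<ge> a" "R \<ge> -a" using Ra by auto
  show ?thesis
  proof (cases "sv i > Dl - NN")
    case True
    hence "a > 0" unfolding a_def by simp
    thus ?thesis using R1 unfolding c0e by simp
  next
    case False
    hence lt: "sv i < sv 0" using sv0_gt NN_pos by auto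
    hence i0: "0 < i" by (cases i) auto
    have "Sg \<ge> sv 0 - sv i"
    proof -
      have "Sg = (sv 0 - sv i) + (\<Sum>k\<in>{..<i} - {0}. sv k - sv i)"
        unfolding Sg_def using i0 by (subst sum.remove[of _ 0]) auto
      moreover have "(\<Sum>k\<in>{..<i} - {0}. sv k - sv i) \<ge> 0"
        using i by (intro sum_nonneg) (auto intro: sv_mono)
      ultimately show ?thesis by simp
    qed
    hence "Sg > 0" using lt by simp
    hence "sqrt (a\<^sup>2 + 4 * NN * Sg) > sqrt (a\<^sup>2)"
      using NN_pos by (intro real_sqrt_less_mono) auto
    hence "R > \<bar>a\<bar>" unfolding R_def by simp
    hence "R > -a" by linarith
    thus ?thesis unfolding c0e by simp
  qed
qed

lemma quad: "(phi - sv i) * c0 = NN * Sg"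
proof -
  let ?a = "sv i - Dl + NN"
  let ?R = "sqrt (?a\<^sup>2 + 4 * NN * Sg)"
  have nn: "?a\<^sup>2 + 4 * NN * Sg \<ge> 0" using NN_pos Sg_nonneg by auto
  have "(phi - sv i) * c0 = (?R - ?a) * (?R + ?a) / 4" unfolding c0_def phi_def by (simp add: field_simps)
  also have "\<dots> = (?R\<^sup>2 - ?a\<^sup>2) / 4" by (simp add: algebra_simps power2_eq_square)
  also have "\<dots> = NN * Sg" using nn by simp
  finally show ?thesis .
qed

lemma xx_ge: "xx k \<ge> 1"
  unfolding xx_def using c0_pos sv_mono[of k i] i by auto

lemma pp_pos: "k < n \<Longrightarrow> pp k > 0"
  unfolding pp_def using dd_pos xx_ge by (smt (verit) mult_pos_pos)

lemma sumx: "NN * (\<Sum>j<n. xx j - 1) = phi - sv i"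
proof -
  have "(\<Sum>j<n. xx j - 1) = (\<Sum>j<i. xx j - 1)"
    using i by (intro sum.mono_neutral_right) (auto simp: xx_def)
  also have "\<dots> = (\<Sum>j<i. (sv j - sv i) / c0)" by (intro sum.cong) (auto simp: xx_def)
  also have "\<dots> = Sg / c0" unfolding Sg_def by (simp add: sum_divide_distrib)
  finally have "NN * (\<Sum>j<n. xx j - 1) = NN * Sg / c0" by simp
  also have "\<dots> = phi - sv i" using quad c0_pos by (simp add: field_simps)
  finally show ?thesis .
qed

end


context T4 begin

definition "nn k = {j. j < n \<and> j \<noteq> k \<and> \<not> E k j}"
definition "sl1 k = (\<Sum>j\<in>nb k. (NN * dd k - dd j) * (xx j - 1))"
definition "sl2 k = NN * dd k * (\<Sum>j\<in>nn k. xx j - 1)"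
definition "sl3 k = dd k * (Dl - real (deg n E k)) * (xx k - 1)"
definition "sl4 k = dd k * (c0 * (xx k - 1) - (sv k - sv i))"

lemma split_n: "k < n \<Longrightarrow> (\<Sum>j<n. f j) = f k + (\<Sum>j\<in>nb k. f j) + (\<Sum>j\<in>nn k. f j)"
proof -
  assume k: "k < n"
  have eq: "{..<n} = insert k (nb k \<union> nn k)" using k E_bound unfolding nb_def nn_def by auto
  have kn: "k \<notin> nb k \<union> nn k" using E_irr unfolding nb_def nn_def by auto
  have dj: "nb k \<inter> nn k = {}" unfolding nb_def nn_def by auto
  have f: "finite (nb k)" "finite (nn k)" unfolding nb_def nn_def by auto
  show ?thesis unfolding eq using kn dj f by (simp add: sum.union_disjoint add.assoc)
qed

lemma row_id: assumes k: "k < n"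
  shows "phi * pp k - (\<Sum>j<n. qQ n E k j * pp j) = sl1 k + sl2 k + sl3 k + sl4 k"
proof -
  define X1 where "X1 = (\<Sum>j\<in>nb k. xx j - 1)"
  define X2 where "X2 = (\<Sum>j\<in>nn k. xx j - 1)"
  define Y where "Y = (\<Sum>j\<in>nb k. dd j * (xx j - 1))"
  have A: "(\<Sum>j<n. qQ n E k j * pp j) = real (deg n E k) * pp k + (\<Sum>j\<in>nb k. pp j)"
    using sum_qQ[OF k, of E pp] unfolding nb_def by simp
  have B: "(\<Sum>j\<in>nb k. pp j) = (\<Sum>j\<in>nb k. dd j) + Y"
    unfolding Y_def pp_def sum.distrib[symmetric] by (intro sum.cong) (auto simp: algebra_simps)
  have C: "(\<Sum>j\<in>nb k. dd j) = (sv k - real (deg n E k)) * dd k"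
    using dd_pos[OF k] unfolding sv_eq by simp
  have D: "NN * ((xx k - 1) + X1 + X2) = phi - sv i"
    using sumx split_n[OF k, of "\<lambda>j. xx j - 1"] unfolding X1_def X2_def by simp
  have S1: "sl1 k = NN * dd k * X1 - Y"
    unfolding sl1_def X1_def Y_def sum_distrib_left sum_subtractf[symmetric]
    by (intro sum.cong) (auto simp: algebra_simps)
  have "phi * pp k - (\<Sum>j<n. qQ n E k j * pp j) - (sl1 k + sl2 k + sl3 k + sl4 k)
     = dd k * (phi - sv i - NN * ((xx k - 1) + X1 + X2))"
    unfolding A B C S1
    unfolding sl2_def sl3_def sl4_def c0_def pp_def X2_def[symmetric]
    by (simp add: algebra_simps)
  also have "\<dots> = 0" using D by simp
  finally show ?thesis by simp
qed

lemma sl1_nn: "k < n \<Longrightarrow> sl1 k \<ge> 0"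
  unfolding sl1_def
proof (intro sum_nonneg mult_nonneg_nonneg)
  fix j assume k: "k < n" and j: "j \<in> nb k"
  have "dd j / dd k \<le> NN" using NN_ge nb_sub[OF j] by auto
  thus "0 \<le> NN * dd k - dd j" using dd_pos[OF k] by (simp add: divide_le_eq algebra_simps)
  show "0 \<le> xx j - 1" using xx_ge[of j] by simp
qed

lemma sl2_nn: "k < n \<Longrightarrow> sl2 k \<ge> 0"
  unfolding sl2_def using NN_pos dd_pos[of k] xx_ge
  by (intro mult_nonneg_nonneg sum_nonneg) (auto simp: less_imp_le)

lemma sl3_nn: "k < n \<Longrightarrow> sl3 k \<ge> 0"
  unfolding sl3_def using dd_pos[of k] xx_ge[of k] Dl_ge[of k]
  by (intro mult_nonneg_nonneg) auto

lemma sl4_nn: "k < n \<Longrightarrow> sl4 k \<ge> 0"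
proof -
  assume k: "k < n"
  have "c0 * (xx k - 1) - (sv k - sv i) \<ge> 0"
  proof (cases "k < i")
    case True thus ?thesis using c0_pos unfolding xx_def by simp
  next
    case False thus ?thesis using sv_mono[of i k] k unfolding xx_def by simp
  qed
  thus ?thesis unfolding sl4_def using dd_pos[OF k] by simp
qed

lemma row_le: "k < n \<Longrightarrow> (\<Sum>j<n. qQ n E k j * pp j) \<le> phi * pp k"
  using row_id[of k] sl1_nn[of k] sl2_nn[of k] sl3_nn[of k] sl4_nn[of k] by linarith

lemma qQ_nn: "qQ n E k j \<ge> 0" unfolding qQ_def by auto

lemma xx_gt: "xx j > 1 \<longleftrightarrow> j < i \<and> sv j > sv i"
  unfolding xx_def using c0_pos by (auto simp: field_simps)

lemma phi_pos: "phi > 0"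
proof -
  have "phi - sv i = NN * Sg / c0" using quad c0_pos by (simp add: field_simps)
  hence "phi \<ge> sv i" using NN_pos Sg_nonneg c0_pos by (smt (verit) divide_nonneg_pos mult_nonneg_nonneg)
  thus ?thesis using sv_gt[OF i] by linarith
qed

theorem rho_le: "rho_Q n E \<le> phi"
proof -
  have n0: "n > 0" using n2 by auto
  obtain lam where lam: "lam \<in> spectrum (map_mat complex_of_real (signless_laplacian n E))"
    "rho_Q n E = cmod lam" using rho_Q_mem[OF n0] by blast
  obtain v j0 where v: "j0 < n" "v j0 \<noteq> 0"
    "\<forall>k<n. (\<Sum>j<n. complex_of_real (qQ n E k j) * v j) = lam * v k"
    using eigen_to_fun[OF lam(1)] by blast
  have "cmod lam \<le> phi"
    by (rule maxprin[of n "qQ n E" pp j0 v lam phi]) (use v qQ_nn pp_pos row_le in auto)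
  thus ?thesis using lam by simp
qed

theorem rho_eq_slacks: assumes eq: "rho_Q n E = phi" and k: "k < n"
  shows "sl1 k = 0 \<and> sl2 k = 0 \<and> sl3 k = 0 \<and> sl4 k = 0"
proof -
  have n0: "n > 0" using n2 by auto
  obtain lam where lam: "lam \<in> spectrum (map_mat complex_of_real (signless_laplacian n E))"
    "rho_Q n E = cmod lam" using rho_Q_mem[OF n0] by blast
  obtain v j0 where v: "j0 < n" "v j0 \<noteq> 0"
    "\<forall>k<n. (\<Sum>j<n. complex_of_real (qQ n E k j) * v j) = lam * v k"
    using eigen_to_fun[OF lam(1)] by blast
  have adj: "E a b \<Longrightarrow> a < n \<and> b < n \<and> qQ n E a b > 0" for a b
    using E_bound[of a b] E_irr[of a] unfolding qQ_def by auto
  have "(\<Sum>j<n. qQ n E k j * pp j) = phi * pp k"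
    by (rule maxprin_eq[of n "qQ n E" pp j0 v lam phi E])
       (use v qQ_nn pp_pos row_le adj conn lam eq k in \<open>auto simp: connected_graph_def\<close>)
  hence "sl1 k + sl2 k + sl3 k + sl4 k = 0" using row_id[OF k] by simp
  thus ?thesis using sl1_nn[OF k] sl2_nn[OF k] sl3_nn[OF k] sl4_nn[OF k] by linarith
qed

theorem slacks_rho_eq: assumes sl: "\<And>k. k < n \<Longrightarrow> sl1 k = 0 \<and> sl2 k = 0 \<and> sl3 k = 0 \<and> sl4 k = 0"
  shows "rho_Q n E = phi"
proof -
  have n0: "n > 0" using n2 by auto
  have "complex_of_real phi \<in> spectrum (map_mat complex_of_real (signless_laplacian n E))"
  proof (rule fun_to_eigen[of 0 n pp])
    show "0 < n" by fact
    show "pp 0 \<noteq> 0" using pp_pos[OF n0] by simp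
    fix k assume k: "k < n"
    show "(\<Sum>j<n. qQ n E k j * pp j) = phi * pp k" using row_id[OF k] sl[OF k] by simp
  qed
  hence "cmod (complex_of_real phi) \<le> rho_Q n E" by (rule rho_Q_ge[OF n0])
  thus ?thesis using rho_le phi_pos by simp
qed

end


context T4 begin

lemma dd_inj: assumes a: "\<alpha> \<noteq> 0" and k: "k < n" and t: "t < n" and e: "dd k = dd t"
  shows "deg n E k = deg n E t"
proof (rule ccontr)
  assume ne: "deg n E k \<noteq> deg n E t"
  have pk: "real (deg n E k) > 0" "real (deg n E t) > 0" using dpos[OF k] dpos[OF t] by auto
  consider "deg n E k < deg n E t" | "deg n E t < deg n E k" using ne by linarith
  thus False
  proof cases
    case 1 hence lt: "real (deg n E k) < real (deg n E t)" by simp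
    show False using a e pk lt powr_less_mono2[of \<alpha> "real (deg n E k)" "real (deg n E t)"]
      powr_less_mono2_neg[of \<alpha> "real (deg n E k)" "real (deg n E t)"] unfolding dd_def
      by (cases "\<alpha> > 0") auto
  next
    case 2 hence lt: "real (deg n E t) < real (deg n E k)" by simp
    show False using a e pk lt powr_less_mono2[of \<alpha> "real (deg n E t)" "real (deg n E k)"]
      powr_less_mono2_neg[of \<alpha> "real (deg n E t)" "real (deg n E k)"] unfolding dd_def
      by (cases "\<alpha> > 0") auto
  qed
qed

lemma deg_full_iff: "j < n \<Longrightarrow> deg n E j = n - 1 \<Longrightarrow> k < n \<Longrightarrow> k \<noteq> j \<Longrightarrow> E j k"
  using deg_full[OF graph] by blast

lemma full_deg: assumes j: "j < n" and adj: "\<And>k. k < n \<Longrightarrow> k \<noteq> j \<Longrightarrow> E j k"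
  shows "deg n E j = n - 1"
proof -
  have "{k. k < n \<and> E j k} = {..<n} - {j}" using adj E_bound E_irr by auto
  thus ?thesis unfolding deg_def using j by simp
qed

lemma Dl_full: "k < n \<Longrightarrow> deg n E k = n - 1 \<Longrightarrow> Dl = real n - 1"
  using Dl_ge[of k] Dl_le n2 by (simp add: of_nat_diff)

lemma sv_alpha0: "\<alpha> = 0 \<Longrightarrow> k < n \<Longrightarrow> sv k = 2 * real (deg n E k)"
proof -
  assume a: "\<alpha> = 0" and k: "k < n"
  have "dd j = 1" if "j < n" for j using dpos[OF that] a unfolding dd_def by simp
  hence "(\<Sum>j\<in>nb k. dd j) = real (card (nb k))" by (simp add: nb_def)
  thus ?thesis unfolding sv_eq nb_card using \<open>\<And>j. j < n \<Longrightarrow> dd j = 1\<close>[OF k] by simp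
qed

lemma sv_const_dd: assumes k: "k < n" and c: "\<And>j. j < n \<Longrightarrow> dd j = c"
  shows "sv k = 2 * real (deg n E k)"
proof -
  have "(\<Sum>j\<in>nb k. dd j) = real (card (nb k)) * c" using c by (simp add: nb_def)
  thus ?thesis unfolding sv_eq nb_card using c[OF k] dd_pos[OF k] by simp
qed

lemma bideg: assumes t: "1 \<le> t" "t < n" and lo: "\<And>k. k < t \<Longrightarrow> deg n E k = n - 1"
  and hi: "\<And>k. t \<le> k \<Longrightarrow> k < n \<Longrightarrow> deg n E k = deg n E t" and lt: "deg n E t < n - 1"
  shows "bidegreed n E"
proof -
  have "deg n E ` {..<n} = {n - 1, deg n E t}"
  proof
    show "deg n E ` {..<n} \<subseteq> {n - 1, deg n E t}"
    proof
      fix x assume "x \<in> deg n E ` {..<n}"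
      then obtain k where k: "k < n" "x = deg n E k" by auto
      show "x \<in> {n - 1, deg n E t}"
      proof (cases "k < t")
        case True thus ?thesis using lo[OF True] k by simp
      next
        case False hence "t \<le> k" by simp
        thus ?thesis using hi[OF _ k(1)] k by simp
      qed
    qed
    show "{n - 1, deg n E t} \<subseteq> deg n E ` {..<n}"
    proof -
      have a: "deg n E 0 \<in> deg n E ` {..<n}" using t by auto
      have b: "deg n E t \<in> deg n E ` {..<n}" using t by auto
      have "deg n E 0 = n - 1" using lo[of 0] t by simp
      thus ?thesis using a b by simp
    qed
  qed
  thus ?thesis unfolding bidegreed_def using lt by simp
qed

definition "P1 \<longleftrightarrow> (\<forall>k<n. sv k = sv 0)"
definition "P2 \<longleftrightarrow> (\<alpha> = 0 \<and> (\<exists>t. 1 \<le> t \<and> t \<le> i \<and> bidegreed n E \<and>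
                (\<forall>k<t. deg n E k = n - 1) \<and> (\<forall>k. t \<le> k \<and> k < n \<longrightarrow> deg n E k = deg n E t) \<and> deg n E t < n - 1))"
definition "P3 \<longleftrightarrow> (\<alpha> > 0 \<and> (\<exists>t. 1 \<le> t \<and> t \<le> i) \<and> bidegreed n E \<and>
                sv 0 > sv 1 \<and> (\<forall>k. 1 \<le> k \<and> k < n \<longrightarrow> sv k = sv 1) \<and>
                deg n E 0 = n - 1 \<and> (\<forall>k. 1 \<le> k \<and> k < n \<longrightarrow> deg n E k = deg n E 1) \<and> deg n E 1 < n - 1)"

lemma sl1_zero_D: assumes k: "k < n" and z: "sl1 k = 0" and j: "E k j" and x: "xx j > 1"
  shows "dd j = NN * dd k"
proof -
  have jn: "j \<in> nb k" using j E_bound unfolding nb_def by auto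
  have nn: "\<forall>j\<in>nb k. (NN * dd k - dd j) * (xx j - 1) \<ge> 0"
  proof
    fix j assume j: "j \<in> nb k"
    have "dd j / dd k \<le> NN" using NN_ge nb_sub[OF j] by auto
    hence "0 \<le> NN * dd k - dd j" using dd_pos[OF k] by (simp add: divide_le_eq algebra_simps)
    thus "(NN * dd k - dd j) * (xx j - 1) \<ge> 0" using xx_ge[of j] by simp
  qed
  have "\<forall>j\<in>nb k. (NN * dd k - dd j) * (xx j - 1) = 0"
    using z nn nb_fin unfolding sl1_def by (subst sum_nonneg_eq_0_iff[symmetric]) auto
  thus ?thesis using jn x by auto
qed

lemma sl2_zero_D: assumes k: "k < n" and z: "sl2 k = 0" and j: "j < n" "j \<noteq> k" and x: "xx j > 1"
  shows "E k j"
proof (rule ccontr)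
  assume "\<not> E k j"
  hence jn: "j \<in> nn k" using j unfolding nn_def by auto
  have f: "finite (nn k)" unfolding nn_def by auto
  have "NN * dd k > 0" using NN_pos dd_pos[OF k] by simp
  hence "(\<Sum>j\<in>nn k. xx j - 1) = 0" using z NN_pos dd_pos[OF k] unfolding sl2_def by simp
  hence "\<forall>j\<in>nn k. xx j - 1 = 0" using f xx_ge by (subst sum_nonneg_eq_0_iff[symmetric]) auto
  thus False using jn x by auto
qed

lemma sl4_zero_D: assumes z: "sl4 k = 0" and k: "k < n" "i \<le> k" shows "sv k = sv i"
  using z dd_pos[OF k(1)] k(2) unfolding sl4_def xx_def by simp

lemma xx_lt_n: "xx j > 1 \<Longrightarrow> j < n" using xx_gt[of j] i by simp

lemma slacks_to_struct:
  assumes sl: "\<And>k. k < n \<Longrightarrow> sl1 k = 0 \<and> sl2 k = 0 \<and> sl3 k = 0 \<and> sl4 k = 0"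
  shows "P1 \<or> P2 \<or> P3"
proof -
  have svi: "sv k = sv i" if k: "k < n" "\<not> xx k > 1" for k
  proof (cases "k < i")
    case True
    have "\<not> sv k > sv i" using k(2) True xx_gt[of k] by simp
    moreover have "sv i \<le> sv k" using sv_mono[of k i] True i by simp
    ultimately show ?thesis by simp
  next
    case False
    have "sl4 k = 0" using sl[OF k(1)] by simp
    thus ?thesis using sl4_zero_D[of k] k(1) False by simp
  qed
  show ?thesis
  proof (cases "\<exists>j<n. xx j > 1")
    case False
    hence "sv k = sv i" if "k < n" for k using svi[OF that] that by blast
    hence P1 unfolding P1_def using n2 by (metis less_le_trans zero_less_numeral)
    thus ?thesis by simp
  next
    case True
    then obtain j0 where j0: "j0 < n" "xx j0 > 1" by auto
    hence j0': "j0 < i" "sv j0 > sv i" using xx_gt[of j0] by auto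
    have "sv 0 \<ge> sv j0" using sv_mono[of 0 j0] j0 by simp
    hence s0: "sv 0 > sv i" using j0' by simp
    have i0: "0 < i" using j0' by simp
    have x0: "xx 0 > 1" using xx_gt[of 0] s0 i0 by simp
    have i1: "1 \<le> i" using i0 by simp
    have adjJ: "E k j" if "xx j > 1" "k < n" "k \<noteq> j" for j k
    proof -
      have jn: "j < n" using xx_lt_n[OF that(1)] .
      have "sl2 k = 0" using sl[OF that(2)] by simp
      thus ?thesis using sl2_zero_D[of k j] that jn by simp
    qed
    have degJ: "deg n E j = n - 1" if "xx j > 1" for j
    proof -
      have jn: "j < n" using xx_lt_n[OF that] .
      have "E j k" if "k < n" "k \<noteq> j" for k using E_sym adjJ[OF \<open>xx j > 1\<close> that] by blast
      thus ?thesis using full_deg[OF jn] by blast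
    qed
    have ddJ: "dd j = NN * dd k" if "xx j > 1" "E k j" for j k
    proof -
      have kn: "k < n" using E_bound[OF that(2)] by simp
      have "sl1 k = 0" using sl[OF kn] by simp
      thus ?thesis using sl1_zero_D[of k j] kn that by simp
    qed
    define t where "t = (LEAST k. \<not> xx k > 1)"
    have xi: "\<not> xx i > 1" using xx_gt[of i] by simp
    have ti: "t \<le> i" unfolding t_def using xi by (rule Least_le)
    have xt: "\<not> xx t > 1" unfolding t_def using xi by (rule LeastI)
    have lo: "xx k > 1" if "k < t" for k using not_less_Least[OF that[unfolded t_def]] by simp
    have t1: "1 \<le> t" using x0 xt by (cases t) auto
    have tn: "t < n" using ti i by simp
    have svt: "sv k = sv i" if kk: "t \<le> k" "k < n" for k
    proof (cases "k < i")
      case True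
      have "sv t = sv i" using svi[OF tn xt] .
      hence "sv k \<le> sv i" using sv_mono[OF kk] by simp
      moreover have "sv k \<ge> sv i" using sv_mono[of k i] True i by simp
      ultimately show ?thesis by simp
    next
      case False
      have "sl4 k = 0" using sl[OF kk(2)] by simp
      thus ?thesis using sl4_zero_D[of k] kk False by simp
    qed
    have lodeg: "deg n E k = n - 1" if "k < t" for k using degJ[OF lo[OF that]] .
    have svti: "sv t = sv i" using svt[OF order.refl tn] .
    show ?thesis
    proof (cases "\<alpha> = 0")
      case True
      have hideg: "deg n E k = deg n E t" if "t \<le> k" "k < n" for k
        using svt[OF that] svti sv_alpha0[OF True that(2)] sv_alpha0[OF True tn] by simp
      have "sv 0 = 2 * real (n - 1)" using sv_alpha0[OF True, of 0] lodeg[of 0] t1 n2 by simp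
      moreover have "sv i = 2 * real (deg n E t)" using svti sv_alpha0[OF True tn] by simp
      ultimately have dt: "deg n E t < n - 1" using s0 by simp
      have "bidegreed n E" using bideg[OF t1 tn lodeg hideg dt] by simp
      have "1 \<le> t \<and> t \<le> i \<and> bidegreed n E \<and>
                (\<forall>k<t. deg n E k = n - 1) \<and> (\<forall>k. t \<le> k \<and> k < n \<longrightarrow> deg n E k = deg n E t) \<and> deg n E t < n - 1"
        using \<open>bidegreed n E\<close> t1 ti lodeg hideg dt by blast
      hence P2 unfolding P2_def using True by blast
      thus ?thesis by simp
    next
      case False
      have E0: "E k 0" if "t \<le> k" "k < n" for k
      proof -
        have "k \<noteq> 0" using that t1 by simp
        thus ?thesis using adjJ[OF x0 that(2)] by simp
      qed
      have dd0: "dd 0 = NN * dd k" if "t \<le> k" "k < n" for k using ddJ[OF x0 E0[OF that]] .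
      have hideg: "deg n E k = deg n E t" if "t \<le> k" "k < n" for k
      proof (rule dd_inj[OF False that(2) tn])
        have "NN * dd k = NN * dd t" using dd0[OF that] dd0[OF order.refl tn] by linarith
        thus "dd k = dd t" using NN_pos by simp
      qed
      have dt: "deg n E t < n - 1"
      proof (rule ccontr)
        assume "\<not> deg n E t < n - 1"
        hence dtf: "deg n E t = n - 1" using dle[OF tn] by simp
        have alld: "deg n E k = n - 1" if "k < n" for k
        proof (cases "k < t")
          case True thus ?thesis using lodeg by simp
        next
          case False thus ?thesis using hideg[of k] that dtf by simp
        qed
        have c: "dd j = dd 0" if "j < n" for j using alld[OF that] alld[of 0] n2 unfolding dd_def by simp
        have "sv k = 2 * real (n - 1)" if "k < n" for k
          using sv_const_dd[OF that c] alld[OF that] by simp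
        hence "sv 0 = sv i" using i n2 by simp
        thus False using s0 by simp
      qed
      have d0: "deg n E 0 = n - 1" using lodeg t1 by simp
      have NNe: "NN = dd 0 / dd t" using dd0[OF order.refl tn] dd_pos[OF tn] by simp
      have "E 0 t" using E_sym[OF E0[OF order.refl tn]] .
      hence "dd t / dd 0 \<le> NN" using NN_ge by simp
      hence "dd t / dd 0 \<le> dd 0 / dd t" using NNe by simp
      moreover have p0: "dd 0 > 0" "dd t > 0" using dd_pos[OF tn] dd_pos[of 0] n2 by auto
      ultimately have "dd t * dd t \<le> dd 0 * dd 0" by (simp add: field_simps)
      hence le: "dd t \<le> dd 0"
      proof -
        assume h: "dd t * dd t \<le> dd 0 * dd 0"
        show ?thesis
        proof (rule ccontr)
          assume "\<not> dd t \<le> dd 0" hence "dd 0 < dd t" by simp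
          hence "dd 0 * dd 0 < dd t * dd t" using mult_strict_mono[of "dd 0" "dd t" "dd 0" "dd t"] p0 by simp
          thus False using h by simp
        qed
      qed
      have rlt: "real (deg n E t) < real (deg n E 0)" using dt d0 by simp
      have rpos: "real (deg n E t) > 0" using dpos[OF tn] by simp
      have apos: "\<alpha> > 0"
      proof (rule ccontr)
        assume "\<not> \<alpha> > 0" hence "\<alpha> < 0" using False by simp
        hence "dd 0 < dd t" using powr_less_mono2_neg[OF _ rpos rlt] unfolding dd_def by simp
        thus False using le by simp
      qed
      have ddlt: "dd t < dd 0" using powr_less_mono2[OF apos _ rlt] rpos unfolding dd_def by simp
      hence NN1: "NN > 1" using NNe p0 by simp
      have t1': "t = 1"
      proof (rule ccontr)
        assume "t \<noteq> 1" hence lt1: "1 < t" using t1 by simp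
        hence "E 1 0" using adjJ[OF x0, of 1] tn by simp
        hence "dd 0 = NN * dd 1" using ddJ[OF x0] by simp
        moreover have "dd 1 = dd 0" using lodeg[OF lt1] d0 unfolding dd_def by simp
        ultimately show False using NN1 p0 by simp
      qed
      have "bidegreed n E" using bideg[OF t1 tn lodeg hideg dt] by simp
      moreover have "sv 0 > sv 1" using s0 svt[of 1] t1' tn by simp
      moreover have "\<forall>k. 1 \<le> k \<and> k < n \<longrightarrow> sv k = sv 1"
      proof (intro allI impI)
        fix k assume "1 \<le> k \<and> k < n"
        thus "sv k = sv 1" using svt[of k] svt[of 1] t1' tn by simp
      qed
      moreover have "\<forall>k. 1 \<le> k \<and> k < n \<longrightarrow> deg n E k = deg n E 1"
      proof (intro allI impI)
        fix k assume "1 \<le> k \<and> k < n"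
        thus "deg n E k = deg n E 1" using hideg[of k] t1' by simp
      qed
      moreover have "\<exists>t::nat. 1 \<le> t \<and> t \<le> i" using i1 by blast
      moreover have "deg n E 1 < n - 1" using dt t1' by simp
      ultimately have P3 unfolding P3_def using apos d0 by blast
      thus ?thesis by simp
    qed
  qed
qed

end


context T4 begin

lemma sl1_zero_I: assumes h: "\<And>j k. xx j > 1 \<Longrightarrow> E k j \<Longrightarrow> dd j = NN * dd k" and k: "k < n"
  shows "sl1 k = 0"
  unfolding sl1_def
proof (rule sum.neutral, rule ballI)
  fix j assume j: "j \<in> nb k"
  show "(NN * dd k - dd j) * (xx j - 1) = 0"
  proof (cases "xx j > 1")
    case True
    have "dd j = NN * dd k" using h[OF True, of k] nb_sub[OF j] by simp
    thus ?thesis by simp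
  next
    case False thus ?thesis using xx_ge[of j] by simp
  qed
qed

lemma sl2_zero_I: assumes h: "\<And>j. xx j > 1 \<Longrightarrow> deg n E j = n - 1" and k: "k < n"
  shows "sl2 k = 0"
proof -
  have "(\<Sum>j\<in>nn k. xx j - 1) = 0"
  proof (rule sum.neutral, rule ballI)
    fix j assume j: "j \<in> nn k"
    hence jj: "j < n" "j \<noteq> k" "\<not> E k j" unfolding nn_def by auto
    show "xx j - 1 = 0"
    proof (cases "xx j > 1")
      case True
      have "E j k" using deg_full_iff[OF jj(1) h[OF True] k] jj(2) by simp
      thus ?thesis using E_sym jj(3) by blast
    next
      case False thus ?thesis using xx_ge[of j] by simp
    qed
  qed
  thus ?thesis unfolding sl2_def by simp
qed

lemma sl3_zero_I: assumes h: "\<And>j. xx j > 1 \<Longrightarrow> deg n E j = n - 1" and k: "k < n"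
  shows "sl3 k = 0"
proof (cases "xx k > 1")
  case True
  have d: "deg n E k = n - 1" using h[OF True] .
  hence "Dl = real n - 1" using Dl_full[OF k] by simp
  moreover have "real (deg n E k) = real n - 1" using d n2 by (simp add: of_nat_diff)
  ultimately show ?thesis unfolding sl3_def by simp
next
  case False thus ?thesis using xx_ge[of k] unfolding sl3_def by simp
qed

lemma sl4_zero_I: assumes h: "i \<le> k \<Longrightarrow> sv k = sv i" and k: "k < n"
  shows "sl4 k = 0"
proof (cases "k < i")
  case True thus ?thesis unfolding sl4_def xx_def using c0_pos by simp
next
  case False thus ?thesis unfolding sl4_def xx_def using h by simp
qed

lemma struct_to_slacks: assumes P: "P1 \<or> P2 \<or> P3" and k: "k < n"
  shows "sl1 k = 0 \<and> sl2 k = 0 \<and> sl3 k = 0 \<and> sl4 k = 0"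
proof -
  consider P1 | P2 | P3 using P by blast
  thus ?thesis
  proof cases
    case 1
    have svs: "sv j = sv i" if "j < n" for j using 1 that i unfolding P1_def by metis
    have nx: "\<not> xx j > 1" for j
    proof
      assume "xx j > 1" hence "j < n" "sv j > sv i" using xx_gt[of j] xx_lt_n by auto
      thus False using svs by simp
    qed
    have "sl1 k = 0" by (rule sl1_zero_I[OF _ k]) (use nx in blast)
    moreover have "sl2 k = 0" by (rule sl2_zero_I[OF _ k]) (use nx in blast)
    moreover have "sl3 k = 0" by (rule sl3_zero_I[OF _ k]) (use nx in blast)
    moreover have "sl4 k = 0" by (rule sl4_zero_I[OF _ k]) (use svs[OF k] in simp)
    ultimately show ?thesis by blast
  next
    case 2
    then obtain t where a0: "\<alpha> = 0" and t: "1 \<le> t" "t \<le> i"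
      and lo: "\<forall>k<t. deg n E k = n - 1" and hi: "\<forall>k. t \<le> k \<and> k < n \<longrightarrow> deg n E k = deg n E t"
      unfolding P2_def by blast
    have "deg n E i = deg n E t" using hi[rule_format, of i] t i by simp
    hence svi: "sv i = 2 * real (deg n E t)" using sv_alpha0[OF a0 i] by simp
    have lt: "j < t" if "xx j > 1" for j
    proof (rule ccontr)
      assume "\<not> j < t"
      moreover have jn: "j < n" "sv j > sv i" using xx_gt[of j] xx_lt_n[OF that] that by auto
      ultimately have "deg n E j = deg n E t" using hi[rule_format, of j] by simp
      hence "sv j = sv i" using sv_alpha0[OF a0 jn(1)] svi by simp
      thus False using jn by simp
    qed
    have dJ: "deg n E j = n - 1" if "xx j > 1" for j using lo lt[OF that] by simp
    have dd1: "dd j = 1" if "j < n" for j using dpos[OF that] a0 unfolding dd_def by simp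
    have NN1: "NN = 1"
    proof -
      obtain a b where ab: "E a b" "NN = dd b / dd a" using NN_mem by blast
      thus ?thesis using dd1[of a] dd1[of b] E_bound[OF ab(1)] by simp
    qed
    have h1: "dd j = NN * dd k" if "xx j > 1" "E k j" for j k
      using dd1 E_bound[OF that(2)] NN1 by simp
    have h4: "sv k = sv i" if "i \<le> k"
    proof -
      have "t \<le> k" using t that by simp
      hence "deg n E k = deg n E t" using hi k by blast
      thus ?thesis using sv_alpha0[OF a0 k] svi by simp
    qed
    show ?thesis using sl1_zero_I[OF h1 k] sl2_zero_I[OF dJ k] sl3_zero_I[OF dJ k] sl4_zero_I[OF h4 k]
      by blast
  next
    case 3
    hence apos: "\<alpha> > 0" and ex1: "\<exists>t::nat. 1 \<le> t \<and> t \<le> i" and s01: "sv 0 > sv 1"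
      and s1: "\<forall>k. 1 \<le> k \<and> k < n \<longrightarrow> sv k = sv 1" and d0: "deg n E 0 = n - 1"
      and d1: "\<forall>k. 1 \<le> k \<and> k < n \<longrightarrow> deg n E k = deg n E 1" and d1lt: "deg n E 1 < n - 1"
      unfolding P3_def by blast+
    from ex1 have i1: "1 \<le> i" by auto
    have n1: "1 < n" using i1 i by simp
    have svi: "sv i = sv 1" using s1[rule_format, of i] i1 i by simp
    have x0: "j = 0" if "xx j > 1" for j
    proof (rule ccontr)
      assume "j \<noteq> 0"
      moreover have jn: "j < n" "sv j > sv i" using xx_gt[of j] xx_lt_n[OF that] that by auto
      ultimately have "sv j = sv 1" using s1[rule_format, of j] by simp
      thus False using jn svi by simp
    qed
    have dJ: "deg n E j = n - 1" if "xx j > 1" for j using x0[OF that] d0 by simp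
    have rlt: "real (deg n E 1) < real (deg n E 0)" using d0 d1lt by simp
    have rpos: "real (deg n E 1) > 0" using dpos[OF n1] by simp
    have ddlt: "dd 1 < dd 0" using powr_less_mono2[OF apos _ rlt] rpos unfolding dd_def by simp
    have p0: "dd 0 > 0" "dd 1 > 0" using dd_pos[OF n1] dd_pos[of 0] n1 by auto
    have ddk: "dd k = dd 1" if "1 \<le> k" "k < n" for k using d1[rule_format, of k] that unfolding dd_def by simp
    have E10: "E 1 0" using deg_full_iff[of 0 1] d0 n1 by (simp add: E_sym)
    have NNe: "NN = dd 0 / dd 1"
    proof (rule antisym)
      show "dd 0 / dd 1 \<le> NN" using NN_ge[OF E10] .
      obtain a b where ab: "E a b" "NN = dd b / dd a" using NN_mem by blast
      have abn: "a < n" "b < n" "a \<noteq> b" using E_bound[OF ab(1)] E_irr ab(1) by auto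
      have ge1: "dd 0 / dd 1 \<ge> 1" using ddlt p0 by simp
      show "NN \<le> dd 0 / dd 1"
      proof (cases "a = 0")
        case True
        hence "dd b = dd 1" using ddk[of b] abn by simp
        hence "NN = dd 1 / dd 0" using ab True by simp
        also have "\<dots> \<le> 1" using ddlt p0 by simp
        finally show ?thesis using ge1 by simp
      next
        case False
        hence "dd a = dd 1" using ddk[of a] abn by simp
        show ?thesis
        proof (cases "b = 0")
          case True thus ?thesis using ab \<open>dd a = dd 1\<close> by simp
        next
          case False
          hence "dd b = dd 1" using ddk[of b] abn by simp
          hence "NN = 1" using ab \<open>dd a = dd 1\<close> p0 by simp
          thus ?thesis using ge1 by simp
        qed
      qed
    qed
    have h1: "dd j = NN * dd k" if "xx j > 1" "E k j" for j k
    proof -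
      have j0: "j = 0" using x0[OF that(1)] .
      have "k \<noteq> 0" using that(2) j0 E_irr[of 0] by metis
      hence "dd k = dd 1" using ddk[of k] E_bound[OF that(2)] by simp
      thus ?thesis using j0 NNe p0 by simp
    qed
    have h4: "sv k = sv i" if "i \<le> k" using s1[rule_format, of k] that i1 k svi by simp
    show ?thesis using sl1_zero_I[OF h1 k] sl2_zero_I[OF dJ k] sl3_zero_I[OF dJ k] sl4_zero_I[OF h4 k]
      by blast
  qed
qed

theorem main: "rho_Q n E \<le> phi \<and> (rho_Q n E = phi \<longleftrightarrow> P1 \<or> P2 \<or> P3)"
proof (intro conjI iffI)
  show "rho_Q n E \<le> phi" by (rule rho_le)
  assume "rho_Q n E = phi"
  thus "P1 \<or> P2 \<or> P3" using rho_eq_slacks slacks_to_struct by blast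
next
  assume "P1 \<or> P2 \<or> P3"
  thus "rho_Q n E = phi" using struct_to_slacks slacks_rho_eq by blast
qed

end

theorem theorem4:
  fixes n :: nat and E :: "nat \<Rightarrow> nat \<Rightarrow> bool" and \<alpha> :: real and i :: nat
  defines "d \<equiv> deg n E"
      and "s \<equiv> (\<lambda>k. gen_avg_deg n E \<alpha> k + real (deg n E k))"
      and "\<Delta> \<equiv> real (Max (deg n E ` {..<n}))"
      and "N \<equiv> Max {real (deg n E b) powr \<alpha> / real (deg n E a) powr \<alpha> | a b. a < n \<and> b < n \<and> E a b}"
  assumes graph: "simple_graph n E"
      and conn: "connected_graph n E"
      and n2: "n \<ge> 2"
      and order: "\<And>k l. k \<le> l \<Longrightarrow> l < n \<Longrightarrow> s l \<le> s k"
      and i: "i < n"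
  shows "(rho_Q n E \<le> (s i + \<Delta> - N + sqrt ((s i - \<Delta> + N)\<^sup>2 + 4 * N * (\<Sum>k<i. s k - s i))) / 2)
    \<and> (rho_Q n E = (s i + \<Delta> - N + sqrt ((s i - \<Delta> + N)\<^sup>2 + 4 * N * (\<Sum>k<i. s k - s i))) / 2
         \<longleftrightarrow>
         (\<forall>k<n. s k = s 0)
         \<or> (\<alpha> = 0 \<and> (\<exists>t. 1 \<le> t \<and> t \<le> i \<and> bidegreed n E \<and>
                (\<forall>k<t. d k = n - 1) \<and> (\<forall>k. t \<le> k \<and> k < n \<longrightarrow> d k = d t) \<and> d t < n - 1))
         \<or> (\<alpha> > 0 \<and> (\<exists>t. 1 \<le> t \<and> t \<le> i) \<and> bidegreed n E \<and>
                s 0 > s 1 \<and> (\<forall>k. 1 \<le> k \<and> k < n \<longrightarrow> s k = s 1) \<and>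
                d 0 = n - 1 \<and> (\<forall>k. 1 \<le> k \<and> k < n \<longrightarrow> d k = d 1) \<and> d 1 < n - 1))"
proof -
  have ord': "\<And>k l. k \<le> l \<Longrightarrow> l < n \<Longrightarrow>
       gen_avg_deg n E \<alpha> l + real (deg n E l) \<le> gen_avg_deg n E \<alpha> k + real (deg n E k)"
    using order unfolding s_def by simp
  interpret T: T4 n E \<alpha> i
    by (rule T4.intro[OF graph conn n2 ord' i])
  have s_eq: "s = T.sv" by (rule ext) (simp add: s_def T.sv_def)
  have D_eq: "\<Delta> = T.Dl" by (simp add: \<Delta>_def T.Dl_def)
  have N_eq: "N = T.NN" by (simp add: N_def T.NN_def)
  have ph: "(s i + \<Delta> - N + sqrt ((s i - \<Delta> + N)\<^sup>2 + 4 * N * (\<Sum>k<i. s k - s i))) / 2 = T.phi"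
    unfolding T.phi_def T.Sg_def s_eq D_eq N_eq ..
  show ?thesis
    using T.main unfolding T.phi_def T.Sg_def T.P1_def T.P2_def T.P3_def
    unfolding s_eq D_eq N_eq d_def .
qed

end
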